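(* Let $N>0$, $m>0$, $F>0$, $\alpha>0$, $w>0$, $\tau\in(0,1)$, $g\geq 0$, $L_g\geq 0$, and define \[ L=\frac{N\left[(1-\tau)(mL_g+\alpha F)+(mg+F)mN\right]}{\alpha+(Nm-\alpha)\tau},\qquad q=\frac{(1-\tau)(L+L_g-\alpha g)}{\left(Nm+\alpha(1-\tau)\right)(L+L_g)}, \] \[ p=\frac{L+L_g}{L+L_g-\alpha g}\left(mw+\frac{\alpha(1-\tau)w}{N}\right). \] If $Nm>\alpha$, then $p-mw>0$.
   Context: These are the symmetric-equilibrium quantities of a monopolistic-competition general equilibrium model: $N$ is the measure of firms, $m$ and $F$ the marginal and fixed labor inputs, $\alpha$ the CARA utility parameter, $w$ the nominal wage, $\tau$ the income tax rate, $g$ the government purchase of each variety, $L_g$ government employment, $L$ private employment, $q$ per-capita consumption of each variety, $p$ the common price (so $mw$ is marginal cost). *)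

theory Defs
  imports Complex_Main
begin

end

theory Submission
  imports Defs
begin

theorem proposition3:
  fixes N m F \<alpha> w \<tau> g L\<^sub>g L q p :: real
  assumes "N > 0" and "m > 0" and "F > 0" and "\<alpha> > 0" and "w > 0"
    and "0 < \<tau>" and "\<tau> < 1" and "g \<ge> 0" and "L\<^sub>g \<ge> 0"
    and L_def: "L = N * ((1 - \<tau>) * (m * L\<^sub>g + \<alpha> * F) + (m * g + F) * m * N)
                    / (\<alpha> + (N * m - \<alpha>) * \<tau>)"
    and q_def: "q = (1 - \<tau>) * (L + L\<^sub>g - \<alpha> * g)
                    / ((N * m + \<alpha> * (1 - \<tau>)) * (L + L\<^sub>g))"
    and p_def: "p = (L + L\<^sub>g) / (L + L\<^sub>g - \<alpha> * g)
                    * (m * w + \<alpha> * (1 - \<tau>) * w / N)"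
    and "N * m > \<alpha>"
  shows "p - m * w > 0"
proof -
  define D where "D = \<alpha> + (N * m - \<alpha>) * \<tau>"
  have D0: "D > 0" using assms unfolding D_def by (simp add: add_pos_nonneg)
  have DN: "D \<le> N * m"
  proof -
    have "D = \<alpha> * (1 - \<tau>) + N * m * \<tau>" unfolding D_def by algebra
    also have "\<dots> \<le> N * m * (1 - \<tau>) + N * m * \<tau>"
      using assms by (intro add_right_mono mult_right_mono) auto
    also have "\<dots> = N * m" by algebra
    finally show ?thesis .
  qed
  have LD: "L * D = N * ((1 - \<tau>) * (m * L\<^sub>g + \<alpha> * F) + (m * g + F) * m * N)"
    using D0 L_def D_def by simp
  have a1: "N * ((1 - \<tau>) * (m * L\<^sub>g + \<alpha> * F)) \<ge> 0"
    using assms by (intro mult_nonneg_nonneg add_nonneg_nonneg) auto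
  have a2: "N * (F * m * N) > 0" using assms by simp
  have a3: "\<alpha> * g * D \<le> N * m * g * (N * m)"
    using assms D0 DN by (intro mult_mono) (auto intro: mult_right_mono)
  have "L * D = N * ((1 - \<tau>) * (m * L\<^sub>g + \<alpha> * F)) + N * (F * m * N) + N * m * g * (N * m)"
    unfolding LD by algebra
  hence "L * D > \<alpha> * g * D" using a1 a2 a3 by linarith
  hence "L > \<alpha> * g" using D0 by simp
  hence pos: "L + L\<^sub>g - \<alpha> * g > 0" using assms by linarith
  have r1: "(L + L\<^sub>g) / (L + L\<^sub>g - \<alpha> * g) \<ge> 1"
    using pos assms by (simp add: le_divide_eq)
  have X: "m * w + \<alpha> * (1 - \<tau>) * w / N > m * w" using assms by simp
  have "p \<ge> m * w + \<alpha> * (1 - \<tau>) * w / N"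
    unfolding p_def using r1 X assms mult_right_mono[OF r1, of "m * w + \<alpha> * (1 - \<tau>) * w / N"]
    by simp
  thus ?thesis using X by linarith
qed

end
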